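(* Let $F\ge1$ and $n_1,\dots,n_F$ be positive integers with $n_1\ge2$, not $(F,n_1)=(1,2)$, and let $p_a$, $r^{(k)}$, $r$ be as in the context. Label the vertices of a regular $r$-gon by $0,1,\dots,r-1$ (modulo $r$) clockwise, and assign to the vertex $t\,r^{(2)} \bmod r$ the time-ordered index $t\in\{0,\dots,r-1\}$. Then for every $a=1,\dots,F$: if the vertex $k$ has time-ordered index $t$, then the vertex $k+r^{(a+1)}$ (mod $r$) has time-ordered index $t+(-1)^{a-1}p_a$ (mod $r$).
   Context: For $1\le k\le a\le F$, let $p^{(k)}_a/q^{(k)}_a$ (coprime positive integers) equal the continued fraction $[n_a,\dots,n_k]:=1/(n_a+1/(n_{a-1}+\cdots+1/n_k))$, $[n_k]=1/n_k$; write $p_a=p^{(1)}_a$. Set $r^{(k)}=p^{(k)}_F+q^{(k)}_F$ for $1\le k\le F$, $r^{(F+1)}=r^{(F+2)}=1$, $r=r^{(1)}$. The integers $r$ and $r^{(2)}$ are coprime, so the time-ordered index is a well-defined bijection between vertices and $\mathbb{Z}/r\mathbb{Z}$. *)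

theory Defs
  imports Complex_Main
begin

text \<open>Continued fraction [n_a,...,n_k] = 1/(n_a + 1/(n_{a-1} + ... + 1/n_k)),
  with [n_k] = 1/n_k.  Meaningful for k \<le> a.\<close>
fun cfrac :: "(nat \<Rightarrow> nat) \<Rightarrow> nat \<Rightarrow> nat \<Rightarrow> rat" where
  "cfrac n k 0 = 1 / of_nat (n k)"
| "cfrac n k (Suc a) =
     (if Suc a \<le> k then 1 / of_nat (n k)
      else 1 / (of_nat (n (Suc a)) + cfrac n k a))"

definition cf_p :: "(nat \<Rightarrow> nat) \<Rightarrow> nat \<Rightarrow> nat \<Rightarrow> int" where
  "cf_p n k a = fst (quotient_of (cfrac n k a))"

definition cf_q :: "(nat \<Rightarrow> nat) \<Rightarrow> nat \<Rightarrow> nat \<Rightarrow> int" where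
  "cf_q n k a = snd (quotient_of (cfrac n k a))"

text \<open>r^{(k)} = p^{(k)}_F + q^{(k)}_F for 1 \<le> k \<le> F, and r^{(k)} = 1 for k > F
  (only k = F+1, F+2 are used).\<close>
definition cf_r :: "(nat \<Rightarrow> nat) \<Rightarrow> nat \<Rightarrow> nat \<Rightarrow> int" where
  "cf_r n F k = (if k \<le> F then cf_p n k F + cf_q n k F else 1)"

definition has_time_index :: "int \<Rightarrow> int \<Rightarrow> int \<Rightarrow> int \<Rightarrow> bool" where
  "has_time_index r r2 v t \<longleftrightarrow> 0 \<le> t \<and> t < r \<and> (t * r2) mod r = v mod r"

end

theory Submission
  imports Defs
begin

lemma qof:
  assumes "r = of_int a / of_int b" "b > 0" "coprime a b"
  shows "quotient_of r = (a, b)"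
proof -
  obtain p q where pq: "quotient_of r = (p, q)" by (cases "quotient_of r")
  have 1: "r = Fract (fst (p,q)) (snd (p,q)) \<and> 0 < snd (p,q) \<and> coprime (fst (p,q)) (snd (p,q))"
    using pq quotient_of_div quotient_of_denom_pos quotient_of_coprime Fract_of_int_quotient by auto
  have 2: "r = Fract (fst (a,b)) (snd (a,b)) \<and> 0 < snd (a,b) \<and> coprime (fst (a,b)) (snd (a,b))"
    using assms Fract_of_int_quotient by auto
  from quotient_of_unique[of r] 1 2 have "(p,q) = (a,b)" by blast
  with pq show ?thesis by simp
qed

fun K :: "(nat \<Rightarrow> int) \<Rightarrow> nat \<Rightarrow> nat \<Rightarrow> int" where
  "K x i 0 = 1"
| "K x i (Suc 0) = x i"
| "K x i (Suc (Suc l)) = x (i + Suc l) * K x i (Suc l) + K x i l"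

lemma K_front: "K x i (Suc (Suc l)) = x i * K x (Suc i) (Suc l) + K x (Suc (Suc i)) l"
proof (induction l rule: less_induct)
  case (less l)
  show ?case
  proof (cases l)
    case 0 then show ?thesis by (simp add: algebra_simps)
  next
    case (Suc l1)
    show ?thesis
    proof (cases l1)
      case 0 then show ?thesis using Suc by (simp add: algebra_simps)
    next
      case (Suc l2)
      have L: "l = Suc (Suc l2)" using Suc \<open>l = Suc l1\<close> by simp
      have h1: "K x i (Suc (Suc (Suc l2))) = x i * K x (Suc i) (Suc (Suc l2)) + K x (Suc (Suc i)) (Suc l2)"
        by (rule less.IH) (simp add: L)
      have h2: "K x i (Suc (Suc l2)) = x i * K x (Suc i) (Suc l2) + K x (Suc (Suc i)) l2"
        by (rule less.IH) (simp add: L)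
      have e1: "K x i (Suc (Suc (Suc (Suc l2)))) = x (i + Suc (Suc (Suc l2))) * K x i (Suc (Suc (Suc l2))) + K x i (Suc (Suc l2))"
        by (rule K.simps(3))
      have e2: "K x (Suc i) (Suc (Suc (Suc l2))) = x (Suc i + Suc (Suc l2)) * K x (Suc i) (Suc (Suc l2)) + K x (Suc i) (Suc l2)"
        by (rule K.simps(3))
      have e3: "K x (Suc (Suc i)) (Suc (Suc l2)) = x (Suc (Suc i) + Suc l2) * K x (Suc (Suc i)) (Suc l2) + K x (Suc (Suc i)) l2"
        by (rule K.simps(3))
      have ix: "x (Suc i + Suc (Suc l2)) = x (i + Suc (Suc (Suc l2)))" "x (Suc (Suc i) + Suc l2) = x (i + Suc (Suc (Suc l2)))"
        by (simp_all add: algebra_simps)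
      show ?thesis unfolding L e1 e2 e3 h1 h2 ix by (simp del: K.simps add: algebra_simps)
    qed
  qed
qed

lemma K_cong: "(\<And>j. j < i + l \<Longrightarrow> x j = y j) \<Longrightarrow> K x i l = K y i l"
  by (induction x i l rule: K.induct) auto

lemma K_pos: "(\<And>j. i \<le> j \<Longrightarrow> j < i + l \<Longrightarrow> x j \<ge> 1) \<Longrightarrow> K x i l \<ge> 1"
proof (induction x i l rule: K.induct)
  case (3 x i l)
  have a: "K x i (Suc l) \<ge> 1" "K x i l \<ge> 1" using 3 by auto
  moreover have b: "x (i + Suc l) \<ge> 1" using 3(3) by auto
  ultimately have "0 \<le> x (i + Suc l) * K x i (Suc l)" by simp
  then show ?case unfolding K.simps using a by linarith
qed auto

lemma K_coprime: "coprime (K x i l) (K x i (Suc l))"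
proof (induction l)
  case 0 then show ?case by simp
next
  case (Suc l)
  have "gcd (K x i (Suc l)) (x (i + Suc l) * K x i (Suc l) + K x i l) = gcd (K x i (Suc l)) (K x i l)"
    by (rule gcd_add_mult)
  also have "\<dots> = 1" using Suc by (simp add: coprime_iff_gcd_eq_1 gcd.commute)
  finally show ?case by (simp only: K.simps coprime_iff_gcd_eq_1)
qed

lemma cfrac_K:
  assumes "1 \<le> k" "k \<le> a" "\<forall>i. k \<le> i \<and> i \<le> a \<longrightarrow> n i > 0"
  shows "cfrac n k a = of_int (K (\<lambda>i. int (n i)) k (a - k)) / of_int (K (\<lambda>i. int (n i)) k (Suc (a - k)))"
  using assms
proof (induction a)
  case 0 then show ?case by simp
next
  case (Suc a)
  show ?case
  proof (cases "Suc a = k")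
    case True
    have "cfrac n k (Suc a) = 1 / of_nat (n k)" unfolding cfrac.simps(2) using True by simp
    then show ?thesis using True by simp
  next
    case False
    then have ka: "k \<le> a" using Suc by simp
    let ?x = "\<lambda>i. int (n i)"
    define P where "P = K ?x k (a - k)"
    define Q where "Q = K ?x k (Suc (a - k))"
    have IH: "cfrac n k a = of_int P / of_int Q" using Suc ka unfolding P_def Q_def by auto
    have Qp: "Q \<ge> 1" unfolding Q_def
      by (rule K_pos) (use Suc.prems ka in auto)
    have e1: "K ?x k (Suc a - k) = Q" using ka unfolding Q_def by (simp add: Suc_diff_le)
    have e2: "K ?x k (Suc (Suc a - k)) = int (n (Suc a)) * Q + P"
    proof -
      have "Suc a - k = Suc (a - k)" using ka by (simp add: Suc_diff_le)
      then have "K ?x k (Suc (Suc a - k)) = ?x (k + Suc (a - k)) * Q + P"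
        unfolding P_def Q_def by simp
      moreover have "k + Suc (a - k) = Suc a" using ka by simp
      ultimately show ?thesis by simp
    qed
    have "cfrac n k (Suc a) = 1 / (of_nat (n (Suc a)) + cfrac n k a)"
      using ka by simp
    also have "\<dots> = of_int Q / of_int (int (n (Suc a)) * Q + P)"
    proof -
      have Pp: "P \<ge> 1" unfolding P_def by (rule K_pos) (use Suc.prems ka in auto)
      have q0: "(of_int Q :: rat) \<noteq> 0" using Qp by simp
      have d0: "(of_int (int (n (Suc a)) * Q + P) :: rat) \<noteq> 0" using Qp Pp
        by (smt (verit) of_int_eq_0_iff of_nat_0_le_iff mult_nonneg_nonneg)
      have "of_nat (n (Suc a)) + of_int P / of_int Q = (of_int (int (n (Suc a)) * Q + P) :: rat) / of_int Q"
        using q0 by (simp add: field_simps)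
      then show ?thesis unfolding IH using q0 d0 by simp
    qed
    finally show ?thesis using e1 e2 by simp
  qed
qed

lemma cf_pq_K:
  assumes "1 \<le> k" "k \<le> a" "\<forall>i. k \<le> i \<and> i \<le> a \<longrightarrow> n i > 0"
  shows "cf_p n k a = K (\<lambda>i. int (n i)) k (a - k)" "cf_q n k a = K (\<lambda>i. int (n i)) k (Suc (a - k))"
proof -
  have Qp: "K (\<lambda>i. int (n i)) k (Suc (a - k)) \<ge> 1"
    by (rule K_pos) (use assms in auto)
  have "quotient_of (cfrac n k a) = (K (\<lambda>i. int (n i)) k (a - k), K (\<lambda>i. int (n i)) k (Suc (a - k)))"
    by (rule qof[OF cfrac_K[OF assms]]) (use Qp K_coprime in auto)
  then show "cf_p n k a = K (\<lambda>i. int (n i)) k (a - k)" "cf_q n k a = K (\<lambda>i. int (n i)) k (Suc (a - k))"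
    unfolding cf_p_def cf_q_def by auto
qed

fun PS :: "(nat \<Rightarrow> int) \<Rightarrow> nat \<Rightarrow> int" where
  "PS m 0 = 0"
| "PS m (Suc 0) = 1"
| "PS m (Suc (Suc a)) = m (Suc a) * PS m (Suc a) + PS m a"

fun QS :: "(nat \<Rightarrow> int) \<Rightarrow> nat \<Rightarrow> int" where
  "QS m 0 = 1"
| "QS m (Suc 0) = 0"
| "QS m (Suc (Suc a)) = m (Suc a) * QS m (Suc a) + QS m a"

lemma PS_K: "PS m (Suc l) = K m 1 l"
proof (induction l rule: less_induct)
  case (less l)
  show ?case
  proof (cases l)
    case 0 then show ?thesis by simp
  next
    case (Suc l1)
    show ?thesis
    proof (cases l1)
      case 0 then show ?thesis using Suc by simp
    next
      case (Suc l2)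
      have L: "l = Suc (Suc l2)" using Suc \<open>l = Suc l1\<close> by simp
      have h1: "PS m (Suc (Suc l2)) = K m 1 (Suc l2)" by (rule less.IH) (simp add: L)
      have h2: "PS m (Suc l2) = K m 1 l2" by (rule less.IH) (simp add: L)
      have "PS m (Suc l) = m (Suc (Suc l2)) * PS m (Suc (Suc l2)) + PS m (Suc l2)"
        unfolding L by (rule PS.simps(3))
      also have "\<dots> = m (1 + Suc l2) * K m 1 (Suc l2) + K m 1 l2" using h1 h2 by simp
      also have "\<dots> = K m 1 l" unfolding L by (rule K.simps(3)[symmetric])
      finally show ?thesis .
    qed
  qed
qed

lemma D_identity:
  fixes u m :: "nat \<Rightarrow> int"
  assumes rec: "\<And>k. 1 \<le> k \<Longrightarrow> k \<le> F \<Longrightarrow> u k = m k * u (Suc k) + u (Suc (Suc k))"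
  shows "Suc j \<le> F \<Longrightarrow> PS m (Suc j) * u 2 - QS m (Suc j) * u 1 = (-1) ^ j * u (j + 2)"
proof (induction j rule: less_induct)
  case (less j)
  show ?case
  proof (cases j)
    case 0 then show ?thesis by (simp add: numeral_eq_Suc)
  next
    case (Suc j1)
    show ?thesis
    proof (cases j1)
      case 0
      have "u 1 = m 1 * u 2 + u 3" using rec[of 1] less.prems Suc 0 by (simp add: numeral_eq_Suc)
      then show ?thesis using Suc 0 by (simp add: numeral_eq_Suc)
    next
      case (Suc j2)
      have J: "j = Suc (Suc j2)" using Suc \<open>j = Suc j1\<close> by simp
      have h1: "PS m (Suc (Suc j2)) * u 2 - QS m (Suc (Suc j2)) * u 1 = (-1) ^ Suc j2 * u (Suc j2 + 2)"
        by (rule less.IH) (use J less.prems in auto)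
      have h2: "PS m (Suc j2) * u 2 - QS m (Suc j2) * u 1 = (-1) ^ j2 * u (j2 + 2)"
        by (rule less.IH) (use J less.prems in auto)
      have r: "u (j2 + 2) = m (j2 + 2) * u (j2 + 3) + u (j2 + 4)"
        using rec[of "j2+2"] less.prems J by (simp add: numeral_eq_Suc)
      have "PS m (Suc j) * u 2 - QS m (Suc j) * u 1
         = m (Suc (Suc j2)) * (PS m (Suc (Suc j2)) * u 2 - QS m (Suc (Suc j2)) * u 1)
           + (PS m (Suc j2) * u 2 - QS m (Suc j2) * u 1)"
        unfolding J by (simp add: algebra_simps)
      also have "\<dots> = m (j2 + 2) * ((-1) ^ Suc j2 * u (j2 + 3)) + (-1) ^ j2 * u (j2 + 2)"
        using h1 h2 by (simp add: numeral_eq_Suc)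
      also have "\<dots> = (-1) ^ j2 * u (j2 + 4)" using r by (simp add: algebra_simps)
      also have "\<dots> = (-1) ^ j * u (j + 2)" using J by (simp add: numeral_eq_Suc)
      finally show ?thesis .
    qed
  qed
qed

lemma K_ext:
  assumes "\<forall>j. j < F \<longrightarrow> m j = x j" "m F = x F + 1" "k + L = F"
  shows "K m k (Suc L) = K x k (Suc L) + K x k L"
proof (cases L)
  case 0 then show ?thesis using assms by simp
next
  case (Suc l)
  have c1: "K m k (Suc l) = K x k (Suc l)" by (rule K_cong) (use assms Suc in auto)
  have c2: "K m k l = K x k l" by (rule K_cong) (use assms Suc in auto)
  have ix: "k + Suc l = F" using assms Suc by simp
  show ?thesis unfolding Suc K.simps(3) c1 c2 ix using assms(2) by (simp add: algebra_simps)
qed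

lemma mod_step:
  fixes r r2 v t s p Q w :: int
  assumes "r > 0" "0 \<le> t" "t < r" "(t * r2) mod r = v mod r"
    and D: "p * r2 - Q * r = s * w" and s: "s * s = 1"
  shows "has_time_index r r2 (v + w) ((t + s * p) mod r)"
proof -
  have E: "s * p * r2 = (s * Q) * r + w" using D s
    by (metis (no_types, lifting) add_diff_cancel_left' diff_add_cancel mult.assoc mult.left_commute mult_1 ring_class.ring_distribs(1))
  have "((t + s * p) mod r * r2) mod r = ((t + s * p) * r2) mod r" by (simp add: mod_mult_left_eq)
  also have "(t + s * p) * r2 = t * r2 + w + (s * Q) * r" using E by (simp add: algebra_simps)
  also have "(t * r2 + w + (s * Q) * r) mod r = (t * r2 + w) mod r" by simp
  also have "\<dots> = ((t * r2) mod r + w) mod r" by (simp add: mod_add_left_eq)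
  also have "\<dots> = (v mod r + w) mod r" using assms(4) by simp
  also have "\<dots> = (v + w) mod r" by (simp add: mod_add_left_eq)
  finally show ?thesis unfolding has_time_index_def using assms(1) by simp
qed

theorem proposition5p29:
  fixes n :: "nat \<Rightarrow> nat" and F :: nat
  assumes "F \<ge> 1"
    and "\<forall>i\<in>{1..F}. n i > 0"
    and "n 1 \<ge> 2"
    and "\<not> (F = 1 \<and> n 1 = 2)"
  shows "\<forall>a\<in>{1..F}. \<forall>v t::int.
           has_time_index (cf_r n F 1) (cf_r n F 2) v t \<longrightarrow>
           has_time_index (cf_r n F 1) (cf_r n F 2)
             (v + cf_r n F (a + 1))
             ((t + (-1) ^ (a - 1) * cf_p n 1 a) mod cf_r n F 1)"
proof (intro ballI allI impI)
  fix a and v t :: int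
  assume aF: "a \<in> {1..F}" and hti: "has_time_index (cf_r n F 1) (cf_r n F 2) v t"
  define x where "x = (\<lambda>i. int (n i))"
  define m where "m = (\<lambda>i. if i = F then x F + 1 else x i)"
  define u where "u = (\<lambda>k. if k \<le> F + 1 then K m k (F + 1 - k) else 0)"
  have npos: "\<And>k b. 1 \<le> k \<Longrightarrow> b \<le> F \<Longrightarrow> \<forall>i. k \<le> i \<and> i \<le> b \<longrightarrow> n i > 0"
    using assms(2) by auto
  have mx: "\<forall>j. j < F \<longrightarrow> m j = x j" "m F = x F + 1" unfolding m_def by auto
  have rU: "cf_r n F k = u k" if "1 \<le> k" "k \<le> F + 1" for k
  proof (cases "k \<le> F")
    case True
    have "cf_r n F k = cf_p n k F + cf_q n k F" using True unfolding cf_r_def by simp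
    also have "\<dots> = K x k (F - k) + K x k (Suc (F - k))"
      using cf_pq_K[OF that(1) True npos[OF that(1) order_refl]] unfolding x_def by simp
    also have "\<dots> = K m k (Suc (F - k))"
      using K_ext[OF mx, of k "F - k"] True by simp
    also have "\<dots> = u k" unfolding u_def using True by (simp add: Suc_diff_le)
    finally show ?thesis .
  next
    case False
    then have "k = F + 1" using that by simp
    then show ?thesis unfolding cf_r_def u_def by simp
  qed
  have urec: "u k = m k * u (Suc k) + u (Suc (Suc k))" if "1 \<le> k" "k \<le> F" for k
  proof (cases "k = F")
    case True
    then show ?thesis unfolding u_def by simp
  next
    case False
    then have kF: "k < F" using that by simp
    then have e: "F + 1 - k = Suc (Suc (F - 1 - k))" "F + 1 - Suc k = Suc (F - 1 - k)"
        "F + 1 - Suc (Suc k) = F - 1 - k" by auto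
    show ?thesis unfolding u_def using kF e K_front[of m k "F - 1 - k"] by simp
  qed
  have u1e: "u 1 = K m 1 F" unfolding u_def by simp
  have "K m 1 F \<ge> 1" by (rule K_pos) (use assms(2) in \<open>auto simp: m_def x_def Suc_le_eq\<close>)
  then have u1: "u 1 \<ge> 1" using u1e by simp
  have a1: "1 \<le> a" "a \<le> F" using aF by auto
  have pa: "cf_p n 1 a = PS m a"
  proof -
    have "cf_p n 1 a = K x 1 (a - 1)"
      using cf_pq_K(1)[OF order_refl a1(1) npos[OF order_refl a1(2)]] unfolding x_def by simp
    also have "\<dots> = K m 1 (a - 1)" by (rule K_cong) (use mx a1 in auto)
    also have "\<dots> = PS m (Suc (a - 1))" by (rule PS_K[symmetric])
    finally show ?thesis using a1 by simp
  qed
  have D: "PS m (Suc (a - 1)) * u 2 - QS m (Suc (a - 1)) * u 1 = (-1) ^ (a - 1) * u (a - 1 + 2)"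
    by (rule D_identity[of F u m]) (use urec a1 in auto)
  have D': "cf_p n 1 a * cf_r n F 2 - QS m a * cf_r n F 1 = (-1) ^ (a - 1) * cf_r n F (a + 1)"
    using D pa a1 rU[of 1] rU[of 2] rU[of "a + 1"] assms(1) by (simp add: numeral_eq_Suc)
  have ss: "((-1::int) ^ (a - 1)) * (-1) ^ (a - 1) = 1" by (simp flip: power_add)
  have rpos: "cf_r n F 1 > 0" using u1 rU[of 1] assms(1) by simp
  from hti have "0 \<le> t" "t < cf_r n F 1" "(t * cf_r n F 2) mod cf_r n F 1 = v mod cf_r n F 1"
    unfolding has_time_index_def by auto
  from mod_step[OF rpos this D' ss] show "has_time_index (cf_r n F 1) (cf_r n F 2)
             (v + cf_r n F (a + 1))
             ((t + (-1) ^ (a - 1) * cf_p n 1 a) mod cf_r n F 1)" .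
qed

end
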